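(* Let $p,q\le 5$ and let $f$ (with $p$ arguments) and $g$ (with $q$ arguments) be real functions whose values depend only on the relative order of their argument lists, with $|f|\le 5$ and $|g|\le 5$. If $\pi$ is a uniformly distributed permutation of $\{1^{n_1},\dots,h^{n_h}\}$ with $n=\sum_a n_a\ge p+q$, then \[\Bigl|\mathrm{Cov}\bigl(f(\pi(1),\dots,\pi(p)),\,g(\pi(p+1),\dots,\pi(p+q))\bigr)\Bigr|\le C/n\] for an absolute constant $C$ (independent of $h$, $n$, the $n_a$, $f$, $g$).
   Context: A permutation of the multiset $\{1^{n_1},\dots,h^{n_h}\}$ ($n_a$ positive integers) is a sequence $(\pi(1),\dots,\pi(n))$ in which each $a$ occurs exactly $n_a$ times; uniformly distributed means all such sequences are equally likely. The relative order of a sequence $s_1,\dots,s_p$ is the ordered partition of $\{1,\dots,p\}$ obtained by putting $q$ and $r$ in the same block iff $s_q=s_r$, with blocks ordered by increasing common value of $s_q$. *)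

theory Defs
  imports "HOL-Probability.Probability" "HOL-Combinatorics.Multiset_Permutations"
begin

text \<open>Relative order of a sequence s_1..s_p (0-indexed here): the ordered partition
  of the positions, blocks = positions with equal value, ordered by increasing value.\<close>
definition rel_order :: "'a::linorder list \<Rightarrow> nat set list" where
  "rel_order s = map (\<lambda>v. {i. i < length s \<and> s ! i = v}) (sorted_list_of_set (set s))"

definition depends_only_on_rel_order :: "nat \<Rightarrow> (nat list \<Rightarrow> real) \<Rightarrow> bool" where
  "depends_only_on_rel_order p f \<longleftrightarrow>
     (\<forall>xs ys. length xs = p \<and> length ys = p \<and> rel_order xs = rel_order ys \<longrightarrow> f xs = f ys)"

definition multiset_of_counts :: "nat \<Rightarrow> (nat \<Rightarrow> nat) \<Rightarrow> nat multiset" where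
  "multiset_of_counts h ns = (\<Sum>a\<in>{1..h}. replicate_mset (ns a) a)"

definition pmf_cov :: "'a pmf \<Rightarrow> ('a \<Rightarrow> real) \<Rightarrow> ('a \<Rightarrow> real) \<Rightarrow> real" where
  "pmf_cov P X Y =
     measure_pmf.expectation P (\<lambda>w. (X w - measure_pmf.expectation P X) *
                                     (Y w - measure_pmf.expectation P Y))"

end

theory Submission
  imports Defs
begin

lemma size_sum_mset: "finite A \<Longrightarrow> size (\<Sum>a\<in>A. F a :: 'b multiset) = (\<Sum>a\<in>A. size (F a))"
  by (induct rule: finite_induct) auto

lemma ext_perm:
  "distinct xs \<Longrightarrow> distinct ys \<Longrightarrow> length xs = length ys \<Longrightarrow> set xs \<subseteq> S \<Longrightarrow> set ys \<subseteq> S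
   \<Longrightarrow> \<exists>\<sigma>. \<sigma> permutes S \<and> map \<sigma> xs = ys"
proof (induct xs arbitrary: ys)
  case Nil
  then show ?case by (auto intro: permutes_id)
next
  case (Cons a xs)
  then obtain b ys' where ys: "ys = b # ys'" by (cases ys) auto
  with Cons obtain \<sigma> where s: "\<sigma> permutes S" "map \<sigma> xs = ys'" by auto
  define c where "c = \<sigma> a"
  have cS: "c \<in> S" using Cons.prems s(1) unfolding c_def by (simp add: permutes_in_image)
  have bS: "b \<in> S" using Cons.prems ys by auto
  have cn: "c \<notin> set ys'"
  proof
    assume "c \<in> set ys'"
    then obtain x where "x \<in> set xs" "\<sigma> x = \<sigma> a" using s(2) c_def by auto
    then have "x = a" using permutes_inj[OF s(1)] by (meson injD)
    then show False using Cons.prems \<open>x \<in> set xs\<close> by auto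
  qed
  have bn: "b \<notin> set ys'" using Cons.prems ys by auto
  have "(Transposition.transpose b c \<circ> \<sigma>) permutes S"
    by (rule permutes_compose[OF s(1) permutes_swap_id[OF bS cS]])
  moreover have "map (Transposition.transpose b c \<circ> \<sigma>) (a # xs) = ys"
  proof -
    have "map (Transposition.transpose b c \<circ> \<sigma>) xs = map \<sigma> xs"
    proof (rule map_cong[OF refl])
      fix x assume "x \<in> set xs"
      then have "\<sigma> x \<in> set ys'" using s(2) by auto
      then show "(Transposition.transpose b c \<circ> \<sigma>) x = \<sigma> x" using cn bn
        by (auto simp: Transposition.transpose_def)
    qed
    then show ?thesis using ys s(2) c_def by (simp add: transpose_def)
  qed
  ultimately show ?case by blast
qed

lemma len_Omega: "\<pi> \<in> permutations_of_multiset M \<Longrightarrow> length \<pi> = size M"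
  by (metis permutations_of_multisetD size_mset)

lemma perm_sum_inv:
  assumes s: "\<sigma> permutes {..<size M}"
  shows "(\<Sum>\<pi>\<in>permutations_of_multiset M. H (permute_list \<sigma> \<pi>)) = (\<Sum>\<pi>\<in>permutations_of_multiset M. H \<pi>)"
proof (rule sum.reindex_bij_witness[where i="permute_list (inv \<sigma>)" and j="permute_list \<sigma>"])
  have si: "inv \<sigma> permutes {..<size M}" using s by (rule permutes_inv)
  fix a assume a: "a \<in> permutations_of_multiset M"
  have la: "length a = size M" using a by (rule len_Omega)
  have h1: "inv \<sigma> i < size M" if "i < size M" for i
    using permutes_in_image[OF si] that by auto
  have h2: "\<sigma> i < size M" if "i < size M" for i
    using permutes_in_image[OF s] that by auto
  show "permute_list (inv \<sigma>) (permute_list \<sigma> a) = a"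
    by (rule nth_equalityI) (auto simp: la permute_list_nth s si h1 permutes_inverses(1)[OF s])
  show "permute_list \<sigma> (permute_list (inv \<sigma>) a) = a"
    by (rule nth_equalityI) (auto simp: la permute_list_nth s si h2 permutes_inverses(2)[OF s])
  show "permute_list \<sigma> a \<in> permutations_of_multiset M"
    using a la s by (auto simp: permutations_of_multiset_def)
  show "permute_list (inv \<sigma>) a \<in> permutations_of_multiset M"
    using a la si by (auto simp: permutations_of_multiset_def)
  show "H (permute_list \<sigma> a) = H (permute_list \<sigma> a)" ..
qed

definition DL :: "nat \<Rightarrow> nat set \<Rightarrow> nat list set" where
  "DL q S = {j. length j = q \<and> distinct j \<and> set j \<subseteq> S}"

lemma finite_DL: "finite S \<Longrightarrow> finite (DL q S)"
  unfolding DL_def by (rule finite_subset[OF _ finite_lists_length_eq[of S q]]) auto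

lemma card_DL: "finite S \<Longrightarrow> q \<le> card S \<Longrightarrow> card (DL q S) = \<Prod>{card S - q + 1 .. card S}"
  unfolding DL_def by (rule card_lists_distinct_length_eq)

lemma exch:
  assumes pq: "p + q \<le> size M" and j: "j \<in> DL q {p..<size M}"
  shows "(\<Sum>\<pi>\<in>permutations_of_multiset M. F (take p \<pi>) * G (map (nth \<pi>) j))
       = (\<Sum>\<pi>\<in>permutations_of_multiset M. F (take p \<pi>) * G (map (nth \<pi>) [p..<p+q]))"
proof -
  obtain \<sigma> where s: "\<sigma> permutes {p..<size M}" "map \<sigma> [p..<p+q] = j"
    using ext_perm[of "[p..<p+q]" j "{p..<size M}"] j pq unfolding DL_def by auto
  have s': "\<sigma> permutes {..<size M}" using s(1) by (rule permutes_subset) auto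
  have "(\<Sum>\<pi>\<in>permutations_of_multiset M. F (take p \<pi>) * G (map (nth \<pi>) [p..<p+q]))
     = (\<Sum>\<pi>\<in>permutations_of_multiset M. (\<lambda>\<pi>. F (take p \<pi>) * G (map (nth \<pi>) [p..<p+q])) (permute_list \<sigma> \<pi>))"
    by (rule perm_sum_inv[OF s', symmetric])
  also have "\<dots> = (\<Sum>\<pi>\<in>permutations_of_multiset M. F (take p \<pi>) * G (map (nth \<pi>) j))"
  proof (rule sum.cong[OF refl])
    fix \<pi> assume a: "\<pi> \<in> permutations_of_multiset M"
    have la: "length \<pi> = size M" using a by (rule len_Omega)
    have "take p (permute_list \<sigma> \<pi>) = take p \<pi>"
    proof (rule nth_equalityI)
      show "length (take p (permute_list \<sigma> \<pi>)) = length (take p \<pi>)" by simp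
      fix i assume "i < length (take p (permute_list \<sigma> \<pi>))"
      then have i: "i < p" "i < size M" using la by auto
      then have "\<sigma> i = i" using s(1) by (intro permutes_not_in) auto
      then show "take p (permute_list \<sigma> \<pi>) ! i = take p \<pi> ! i"
        using i la s' by (simp add: permute_list_nth)
    qed
    moreover have "map (nth (permute_list \<sigma> \<pi>)) [p..<p+q] = map (nth \<pi>) j"
      unfolding s(2)[symmetric] using pq la s' by (auto simp: permute_list_nth)
    ultimately show "(\<lambda>\<pi>. F (take p \<pi>) * G (map (nth \<pi>) [p..<p+q])) (permute_list \<sigma> \<pi>)
        = F (take p \<pi>) * G (map (nth \<pi>) j)" by simp
  qed
  finally show ?thesis by simp
qed

lemma j0_DL: "p + q \<le> n \<Longrightarrow> [p..<p+q] \<in> DL q {p..<n}"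
  unfolding DL_def by auto

lemma avg_ident:
  assumes pq: "p + q \<le> size M"
  shows "(\<Sum>\<pi>\<in>permutations_of_multiset M. F (take p \<pi>) * G (map (nth \<pi>) [p..<p+q]))
    = (\<Sum>\<pi>\<in>permutations_of_multiset M. F (take p \<pi>) *
         ((\<Sum>j\<in>DL q {p..<size M}. G (map (nth \<pi>) j)) / card (DL q {p..<size M})))"
proof -
  let ?D = "DL q {p..<size M}"
  let ?S = "\<Sum>\<pi>\<in>permutations_of_multiset M. F (take p \<pi>) * G (map (nth \<pi>) [p..<p+q])"
  have fin: "finite ?D" by (rule finite_DL) simp
  have K: "card ?D > 0" using fin j0_DL[OF pq] card_gt_0_iff by blast
  have "(\<Sum>\<pi>\<in>permutations_of_multiset M. F (take p \<pi>) *
         ((\<Sum>j\<in>?D. G (map (nth \<pi>) j)) / card ?D))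
     = (\<Sum>\<pi>\<in>permutations_of_multiset M. \<Sum>j\<in>?D. F (take p \<pi>) * G (map (nth \<pi>) j)) / card ?D"
    by (simp add: sum_divide_distrib sum_distrib_left)
  also have "\<dots> = (\<Sum>j\<in>?D. \<Sum>\<pi>\<in>permutations_of_multiset M. F (take p \<pi>) * G (map (nth \<pi>) j)) / card ?D"
    by (simp add: sum.swap[of _ "permutations_of_multiset M"])
  also have "\<dots> = (\<Sum>j\<in>?D. ?S) / card ?D"
  proof -
    have "\<And>j. j \<in> ?D \<Longrightarrow> (\<Sum>\<pi>\<in>permutations_of_multiset M. F (take p \<pi>) * G (map (nth \<pi>) j)) = ?S"
      by (rule exch[OF pq])
    then show ?thesis by (metis (no_types, lifting) sum.cong)
  qed
  also have "\<dots> = ?S" using K by simp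
  finally show ?thesis by simp
qed

lemma A_const:
  assumes a: "\<pi> \<in> permutations_of_multiset M" and b: "\<pi>' \<in> permutations_of_multiset M"
  shows "(\<Sum>j\<in>DL q {..<size M}. G (map (nth \<pi>') j)) = (\<Sum>j\<in>DL q {..<size M}. G (map (nth \<pi>) j))"
proof -
  have la: "length \<pi> = size M" using a by (rule len_Omega)
  have "mset \<pi>' = mset \<pi>" using a b by (simp add: permutations_of_multisetD)
  then obtain \<tau> where t: "\<tau> permutes {..<length \<pi>}" "permute_list \<tau> \<pi> = \<pi>'"
    by (rule mset_eq_permutation)
  have t': "\<tau> permutes {..<size M}" using t la by simp
  have ti: "inv \<tau> permutes {..<size M}" using t' by (rule permutes_inv)
  show ?thesis
  proof (rule sum.reindex_bij_witness[where i="map (inv \<tau>)" and j="map \<tau>"])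
    fix x assume x: "x \<in> DL q {..<size M}"
    show "map (inv \<tau>) (map \<tau> x) = x" by (simp add: permutes_inv_o(2)[OF t'])
    show "map \<tau> x \<in> DL q {..<size M}" using x permutes_inj[OF t'] permutes_in_image[OF t']
      unfolding DL_def by (auto simp: distinct_map inj_on_subset)
    have "map (nth \<pi>) (map \<tau> x) = map (nth \<pi>') x"
      unfolding t(2)[symmetric] map_map
    proof (rule map_cong[OF refl])
      fix i assume "i \<in> set x"
      then have "i < length \<pi>" using x la unfolding DL_def by auto
      then show "(nth \<pi> \<circ> \<tau>) i = permute_list \<tau> \<pi> ! i" using t(1) by (simp add: permute_list_nth)
    qed
    then show "G (map (nth \<pi>) (map \<tau> x)) = G (map (nth \<pi>') x)" by metis
  next
    fix x assume x: "x \<in> DL q {..<size M}"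
    show "map \<tau> (map (inv \<tau>) x) = x" by (simp add: permutes_inv_o(1)[OF t'])
    show "map (inv \<tau>) x \<in> DL q {..<size M}" using x permutes_inj[OF ti] permutes_in_image[OF ti]
      unfolding DL_def by (auto simp: distinct_map inj_on_subset)
  qed
qed


lemma arith1:
  fixes k k0 s1 s2 :: real
  assumes "0 < k" "k \<le> k0" "\<bar>s1\<bar> \<le> 5 * k" "\<bar>s2\<bar> \<le> 5 * (k0 - k)"
  shows "\<bar>(s1 + s2) / k0 - s1 / k\<bar> \<le> 10 * (1 - k / k0)"
proof -
  have k0: "0 < k0" using assms by linarith
  have e: "(s1 + s2) / k0 - s1 / k = (s1 * (k - k0) / k + s2) / k0"
    using k0 assms(1) by (simp add: field_simps)
  have "\<bar>s1 * (k - k0) / k\<bar> = \<bar>s1\<bar> * (k0 - k) / k" using assms(1,2) by (simp add: abs_mult)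
  also have "\<dots> \<le> 5 * k * (k0 - k) / k"
    using assms by (intro divide_right_mono mult_right_mono) auto
  also have "\<dots> = 5 * (k0 - k)" using assms(1) by simp
  finally have "\<bar>s1 * (k - k0) / k + s2\<bar> \<le> 10 * (k0 - k)"
    using assms(4) abs_triangle_ineq[of "s1 * (k - k0) / k" s2] by (smt (verit))
  then have "\<bar>(s1 * (k - k0) / k + s2) / k0\<bar> \<le> 10 * (k0 - k) / k0"
    using k0 by (simp add: divide_right_mono)
  also have "\<dots> = 10 * (1 - k / k0)" using k0 by (simp add: field_simps)
  finally show ?thesis using e by simp
qed

lemma sum_abs_bound:
  fixes f :: "'a \<Rightarrow> real"
  assumes "\<And>x. x \<in> A \<Longrightarrow> \<bar>f x\<bar> \<le> c"
  shows "\<bar>sum f A\<bar> \<le> c * card A"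
proof -
  have "\<bar>sum f A\<bar> \<le> (\<Sum>x\<in>A. \<bar>f x\<bar>)" by (rule sum_abs)
  also have "\<dots> \<le> (\<Sum>x\<in>A. c)" using assms by (intro sum_mono) auto
  also have "\<dots> = c * card A" by simp
  finally show ?thesis .
qed

lemma A_close:
  assumes pq: "p + q \<le> size M" and G: "\<forall>ys. length ys = q \<longrightarrow> \<bar>G ys\<bar> \<le> 5"
  shows "\<bar>(\<Sum>j\<in>DL q {..<size M}. G (map (nth \<pi>) j)) / card (DL q {..<size M})
          - (\<Sum>j\<in>DL q {p..<size M}. G (map (nth \<pi>) j)) / card (DL q {p..<size M})\<bar>
         \<le> 10 * (1 - card (DL q {p..<size M}) / card (DL q {..<size M}))"
proof -
  let ?DA = "DL q {..<size M}"
  let ?D = "DL q {p..<size M}"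
  let ?g = "\<lambda>j. G (map (nth \<pi>) j)"
  have sub: "?D \<subseteq> ?DA" unfolding DL_def by auto
  have f0: "finite ?DA" by (rule finite_DL) simp
  have K: "card ?D > 0" using finite_DL[of "{p..<size M}"] j0_DL[OF pq] card_gt_0_iff by blast
  have KK: "card ?D \<le> card ?DA" by (rule card_mono[OF f0 sub])
  have split: "sum ?g ?DA = sum ?g ?D + sum ?g (?DA - ?D)"
    using sum.subset_diff[OF sub f0, of ?g] by simp
  have b: "\<bar>?g j\<bar> \<le> 5" if "j \<in> ?DA" for j using G that unfolding DL_def by auto
  have s1: "\<bar>sum ?g ?D\<bar> \<le> 5 * real (card ?D)" using b sub by (intro sum_abs_bound) auto
  have "\<bar>sum ?g (?DA - ?D)\<bar> \<le> 5 * real (card (?DA - ?D))" using b by (intro sum_abs_bound) auto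
  also have "card (?DA - ?D) = card ?DA - card ?D" using sub f0 by (simp add: card_Diff_subset finite_subset)
  finally have s2: "\<bar>sum ?g (?DA - ?D)\<bar> \<le> 5 * (real (card ?DA) - real (card ?D))"
    using KK by (simp add: of_nat_diff)
  show ?thesis unfolding split
    by (rule arith1) (use K KK s1 s2 in auto)
qed

lemma prod_ge_pow: "finite A \<Longrightarrow> (\<And>i. i \<in> A \<Longrightarrow> c \<le> i) \<Longrightarrow> (c::nat) ^ card A \<le> \<Prod>A"
proof -
  assume "finite A" "\<And>i. i \<in> A \<Longrightarrow> c \<le> i"
  then have "(\<Prod>i\<in>A. c) \<le> (\<Prod>i\<in>A. i)" by (intro prod_mono) auto
  then show ?thesis by simp
qed

lemma prod_le_pow: "finite A \<Longrightarrow> (\<And>i. i \<in> A \<Longrightarrow> i \<le> c) \<Longrightarrow> \<Prod>A \<le> (c::nat) ^ card A"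
proof -
  assume "finite A" "\<And>i. i \<in> A \<Longrightarrow> i \<le> c"
  then have "(\<Prod>i\<in>A. i) \<le> (\<Prod>i\<in>A. c)" by (intro prod_mono) auto
  then show ?thesis by simp
qed

lemma theta:
  assumes n: "0 < n" and pq: "p + q \<le> n"
  shows "1 - real (card (DL q {p..<n})) / card (DL q {..<n}) \<le> real (q * (p + q)) / n"
proof -
  have K: "card (DL q {p..<n}) = \<Prod>{n - p - q + 1 .. n - p}"
    using card_DL[of "{p..<n}" q] pq by simp
  have K0: "card (DL q {..<n}) = \<Prod>{n - q + 1 .. n}"
    using card_DL[of "{..<n}" q] pq by simp
  have c1: "card {n - p - q + 1 .. n - p} = q" using pq by simp
  have c2: "card {n - q + 1 .. n} = q" using pq by simp
  have lo: "(n - p - q) ^ q \<le> card (DL q {p..<n})"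
  proof -
    have "(n - p - q) ^ card {n - p - q + 1 .. n - p} \<le> \<Prod>{n - p - q + 1 .. n - p}"
      by (rule prod_ge_pow) auto
    then show ?thesis unfolding K c1 .
  qed
  have hi: "card (DL q {..<n}) \<le> n ^ q"
  proof -
    have "\<Prod>{n - q + 1 .. n} \<le> n ^ card {n - q + 1 .. n}"
      by (rule prod_le_pow) auto
    then show ?thesis unfolding K0 c2 .
  qed
  have K0p: "0 < card (DL q {..<n})"
    unfolding K0 by (subst prod_pos) auto
  define x where "x = - real (p + q) / n"
  have x1: "-1 \<le> x" unfolding x_def using n pq by (simp add: field_simps)
  have "1 + real q * x \<le> (1 + x) ^ q" by (rule Bernoulli_inequality[OF x1])
  also have "1 + x = real (n - p - q) / n" unfolding x_def using n pq by (simp add: field_simps of_nat_diff)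
  also have "(real (n - p - q) / n) ^ q = real ((n - p - q) ^ q) / real (n ^ q)"
    by (simp add: power_divide)
  also have "\<dots> \<le> real (card (DL q {p..<n})) / real (n ^ q)"
    using lo by (intro divide_right_mono) auto
  also have "\<dots> \<le> real (card (DL q {p..<n})) / card (DL q {..<n})"
    using hi K0p n by (intro divide_left_mono) auto
  finally show ?thesis unfolding x_def using n by (simp add: field_simps)
qed

lemma cov_sum:
  assumes "S \<noteq> {}" "finite S"
  shows "pmf_cov (pmf_of_set S) X Y =
    (\<Sum>w\<in>S. (X w - sum X S / card S) * (Y w - sum Y S / card S)) / card S"
  unfolding pmf_cov_def integral_pmf_of_set[OF assms] ..

lemma take_drop_map: "p + q \<le> length \<pi> \<Longrightarrow> take q (drop p \<pi>) = map (nth \<pi>) [p..<p+q]"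
  by (rule nth_equalityI) auto

lemma main_bound:
  assumes pq: "p + q \<le> size M" and n: "0 < size M"
    and F: "\<forall>xs. length xs = p \<longrightarrow> \<bar>F xs\<bar> \<le> 5"
    and G: "\<forall>ys. length ys = q \<longrightarrow> \<bar>G ys\<bar> \<le> (5::real)"
  shows "\<bar>pmf_cov (pmf_of_set (permutations_of_multiset M))
        (\<lambda>\<pi>. F (take p \<pi>)) (\<lambda>\<pi>. G (take q (drop p \<pi>)))\<bar> \<le> 100 * (real (q * (p + q)) / size M)"
proof -
  let ?W = "permutations_of_multiset M"
  let ?N = "real (card ?W)"
  let ?X = "\<lambda>\<pi>. F (take p \<pi>)"
  let ?Y = "\<lambda>\<pi>. G (take q (drop p \<pi>))"
  let ?DA = "DL q {..<size M}"
  let ?D = "DL q {p..<size M}"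
  let ?th = "1 - real (card ?D) / card ?DA"
  define mX where "mX = sum ?X ?W / ?N"
  define mY where "mY = sum ?Y ?W / ?N"
  define Yb where "Yb = (\<lambda>\<pi>. (\<Sum>j\<in>?D. G (map (nth \<pi>) j)) / card ?D)"
  obtain \<pi>0 where p0: "mset \<pi>0 = M" using ex_mset by blast
  then have p0W: "\<pi>0 \<in> ?W" by (simp add: permutations_of_multisetI)
  define c where "c = (\<Sum>j\<in>?DA. G (map (nth \<pi>0) j)) / card ?DA"
  have ne: "?W \<noteq> {}" using p0W by blast
  have fin: "finite ?W" by simp
  have Npos: "?N > 0" using ne fin by (simp add: card_gt_0_iff)
  have len: "\<And>\<pi>. \<pi> \<in> ?W \<Longrightarrow> length \<pi> = size M" by (rule len_Omega)
  have Xb: "\<bar>?X \<pi>\<bar> \<le> 5" if "\<pi> \<in> ?W" for \<pi> using F len[OF that] pq by auto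
  have "\<bar>sum ?X ?W\<bar> \<le> 5 * ?N" using Xb by (intro sum_abs_bound) auto
  then have mXb: "\<bar>mX\<bar> \<le> 5"
  proof -
    assume a: "\<bar>sum ?X ?W\<bar> \<le> 5 * ?N"
    have "\<bar>mX\<bar> = \<bar>sum ?X ?W\<bar> / ?N" unfolding mX_def using Npos by simp
    also have "\<dots> \<le> 5 * ?N / ?N" using a Npos by (intro divide_right_mono) auto
    also have "\<dots> = 5" using Npos by simp
    finally show ?thesis .
  qed
  have sX: "(\<Sum>\<pi>\<in>?W. ?X \<pi> - mX) = 0"
    unfolding sum_subtractf mX_def using Npos by simp
  have YY: "?Y \<pi> = G (map (nth \<pi>) [p..<p+q])" if "\<pi> \<in> ?W" for \<pi>
    using take_drop_map[of p q \<pi>] len[OF that] pq by simp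
  have "(\<Sum>\<pi>\<in>?W. (?X \<pi> - mX) * (?Y \<pi> - mY))
      = (\<Sum>\<pi>\<in>?W. (?X \<pi> - mX) * ?Y \<pi>) - mY * (\<Sum>\<pi>\<in>?W. ?X \<pi> - mX)"
  proof -
    have "\<And>\<pi>. (?X \<pi> - mX) * (?Y \<pi> - mY) = (?X \<pi> - mX) * ?Y \<pi> - mY * (?X \<pi> - mX)"
      by (simp add: algebra_simps)
    then show ?thesis by (simp only: sum_subtractf sum_distrib_left right_diff_distrib)
  qed
  also have "\<dots> = (\<Sum>\<pi>\<in>?W. (?X \<pi> - mX) * ?Y \<pi>)" using sX by simp
  also have "\<dots> = (\<Sum>\<pi>\<in>?W. (F (take p \<pi>) - mX) * G (map (nth \<pi>) [p..<p+q]))"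
    using YY by (intro sum.cong) auto
  also have "\<dots> = (\<Sum>\<pi>\<in>?W. (F (take p \<pi>) - mX) * Yb \<pi>)"
    unfolding Yb_def by (rule avg_ident[OF pq, where F="\<lambda>u. F u - mX"])
  also have "\<dots> = (\<Sum>\<pi>\<in>?W. (?X \<pi> - mX) * (Yb \<pi> - c)) + c * (\<Sum>\<pi>\<in>?W. ?X \<pi> - mX)"
  proof -
    have "\<And>\<pi>. (?X \<pi> - mX) * Yb \<pi> = (?X \<pi> - mX) * (Yb \<pi> - c) + c * (?X \<pi> - mX)"
      by (simp add: algebra_simps)
    then show ?thesis by (simp only: sum.distrib sum_distrib_left)
  qed
  also have "\<dots> = (\<Sum>\<pi>\<in>?W. (?X \<pi> - mX) * (Yb \<pi> - c))" using sX by simp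
  finally have eq: "(\<Sum>\<pi>\<in>?W. (?X \<pi> - mX) * (?Y \<pi> - mY)) = (\<Sum>\<pi>\<in>?W. (?X \<pi> - mX) * (Yb \<pi> - c))" .
  have th: "?th \<le> real (q * (p + q)) / size M" by (rule theta[OF n pq])
  have bnd: "\<bar>(?X \<pi> - mX) * (Yb \<pi> - c)\<bar> \<le> 100 * ?th" if "\<pi> \<in> ?W" for \<pi>
  proof -
    have c: "c = (\<Sum>j\<in>?DA. G (map (nth \<pi>) j)) / card ?DA"
      unfolding c_def using A_const[OF that p0W, where q=q and G=G] by simp
    have y: "\<bar>Yb \<pi> - c\<bar> \<le> 10 * ?th"
      using A_close[OF pq G, of \<pi>] unfolding c Yb_def by (simp add: abs_minus_commute)
    have x: "\<bar>?X \<pi> - mX\<bar> \<le> 10" using Xb[OF that] mXb by linarith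
    have "\<bar>(?X \<pi> - mX) * (Yb \<pi> - c)\<bar> = \<bar>?X \<pi> - mX\<bar> * \<bar>Yb \<pi> - c\<bar>" by (simp add: abs_mult)
    also have "\<dots> \<le> 10 * (10 * ?th)" using x y by (intro mult_mono) auto
    finally show ?thesis by simp
  qed
  have "\<bar>(\<Sum>\<pi>\<in>?W. (?X \<pi> - mX) * (Yb \<pi> - c))\<bar> \<le> 100 * ?th * ?N"
    using bnd by (rule sum_abs_bound)
  then have "\<bar>(\<Sum>\<pi>\<in>?W. (?X \<pi> - mX) * (?Y \<pi> - mY)) / ?N\<bar> \<le> 100 * ?th"
  proof -
    assume a: "\<bar>(\<Sum>\<pi>\<in>?W. (?X \<pi> - mX) * (Yb \<pi> - c))\<bar> \<le> 100 * ?th * ?N"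
    have "\<bar>(\<Sum>\<pi>\<in>?W. (?X \<pi> - mX) * (?Y \<pi> - mY)) / ?N\<bar>
       = \<bar>(\<Sum>\<pi>\<in>?W. (?X \<pi> - mX) * (Yb \<pi> - c))\<bar> / ?N" unfolding eq using Npos by simp
    also have "\<dots> \<le> 100 * ?th * ?N / ?N" using a Npos by (intro divide_right_mono) auto
    also have "\<dots> = 100 * ?th" using Npos by simp
    finally show ?thesis .
  qed
  then have "\<bar>pmf_cov (pmf_of_set ?W) ?X ?Y\<bar> \<le> 100 * ?th"
    unfolding cov_sum[OF ne fin] mX_def mY_def by simp
  moreover have "100 * ?th \<le> 100 * (real (q * (p + q)) / size M)"
    using th by (rule mult_left_mono) simp
  ultimately show ?thesis by (rule order_trans)
qed


theorem lemma2p10: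
  shows "\<exists>C::real. \<forall>(p::nat) (q::nat) (f::nat list \<Rightarrow> real) (g::nat list \<Rightarrow> real)
            (h::nat) (ns::nat \<Rightarrow> nat).
     p \<le> 5 \<and> q \<le> 5 \<and>
     depends_only_on_rel_order p f \<and> depends_only_on_rel_order q g \<and>
     (\<forall>xs. length xs = p \<longrightarrow> \<bar>f xs\<bar> \<le> 5) \<and>
     (\<forall>ys. length ys = q \<longrightarrow> \<bar>g ys\<bar> \<le> 5) \<and>
     (\<forall>a\<in>{1..h}. ns a > 0) \<and>
     (\<Sum>a\<in>{1..h}. ns a) \<ge> p + q
     \<longrightarrow>
     \<bar>pmf_cov (pmf_of_set (permutations_of_multiset (multiset_of_counts h ns)))
        (\<lambda>\<pi>. f (take p \<pi>)) (\<lambda>\<pi>. g (take q (drop p \<pi>)))\<bar>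
       \<le> C / real (\<Sum>a\<in>{1..h}. ns a)"
proof (rule exI[of _ 5000], intro allI impI, elim conjE)
  fix p q :: nat and f g :: "nat list \<Rightarrow> real" and h :: nat and ns :: "nat \<Rightarrow> nat"
  assume p5: "p \<le> 5" and q5: "q \<le> 5"
    and F: "\<forall>xs. length xs = p \<longrightarrow> \<bar>f xs\<bar> \<le> 5" and G: "\<forall>ys. length ys = q \<longrightarrow> \<bar>g ys\<bar> \<le> 5"
    and pq: "(\<Sum>a\<in>{1..h}. ns a) \<ge> p + q"
  let ?M = "multiset_of_counts h ns"
  let ?n = "\<Sum>a\<in>{1..h}. ns a"
  have sz: "size ?M = ?n" unfolding multiset_of_counts_def by (simp add: size_sum_mset)
  show "\<bar>pmf_cov (pmf_of_set (permutations_of_multiset ?M))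
        (\<lambda>\<pi>. f (take p \<pi>)) (\<lambda>\<pi>. g (take q (drop p \<pi>)))\<bar> \<le> 5000 / real ?n"
  proof (cases "?n = 0")
    case True
    then have "?M = {#}" using sz by simp
    then show ?thesis using True by (simp add: cov_sum)
  next
    case False
    then have n: "0 < size ?M" using sz by (metis gr0I)
    have "\<bar>pmf_cov (pmf_of_set (permutations_of_multiset ?M))
        (\<lambda>\<pi>. f (take p \<pi>)) (\<lambda>\<pi>. g (take q (drop p \<pi>)))\<bar> \<le> 100 * (real (q * (p + q)) / size ?M)"
      by (rule main_bound[OF _ n F G]) (use pq sz in simp)
    also have "\<dots> \<le> 100 * (50 / size ?M)"
    proof -
      have "q * (p + q) \<le> 5 * (5 + 5)" using p5 q5 by (intro mult_mono) auto
      then have "q * (p + q) \<le> 50" by simp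
      then have "real (q * (p + q)) \<le> 50" by (metis of_nat_le_iff of_nat_numeral)
      then show ?thesis using n by (intro mult_left_mono divide_right_mono) auto
    qed
    also have "\<dots> = 5000 / real ?n" using sz by simp
    finally show ?thesis .
  qed
qed

end
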